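(* Every $L\in\mathcal L(C_6)$ which is an arithmetical multiprogression with difference $4$ and period $\{0,3,4\}$ lies in $\mathcal L(C_2^5)$.
   Context: $C_n$ denotes a cyclic group of order $n$ and $C_2^r$ an elementary abelian $2$-group of rank $r$; $[a,b]=\{x\in\mathbb Z:a\le x\le b\}$. For a subset $G_0$ of a finite abelian group $G$, a sequence over $G_0$ is an element of the free abelian monoid $\mathcal F(G_0)$ with basis $G_0$ (a finite unordered list of elements of $G_0$, repetitions allowed). $\mathcal B(G_0)$ is the monoid of zero-sum sequences over $G_0$ (including the empty sequence). An atom is a minimal zero-sum sequence, i.e. a nonempty zero-sum sequence that is not a product of two nonempty zero-sum sequences. For $B\in\mathcal B(G_0)$, $\mathsf L(B)=\{k\in\mathbb N_0: B \text{ is a product of } k \text{ atoms}\}$, and $\mathcal L(G_0)=\{\mathsf L(B):B\in\mathcal B(G_0)\}$; $\mathcal L(G)$ is the case $G_0=G$. Arithmetical multiprogression (AMP): for $d\in\mathbb N$ and $\{0,d\}\subset\mathcal D\subset[0,d]$, a set $L\subset\mathbb Z$ is an AMP with difference $d$ and period $\mathcal D$ if $L$ is finite, nonempty, and $L=(\min L+\mathcal D+d\mathbb Z)\cap[\min L,\max L]$. *)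

theory Defs
  imports "HOL-Analysis.Finite_Cartesian_Product" "HOL-Library.Numeral_Type" "HOL-Library.Multiset"
begin

text \<open>Sequences over a subset G0 of an abelian group are finite multisets of elements of G0.\<close>

definition zero_sum :: "'a::comm_monoid_add multiset \<Rightarrow> bool" where
  "zero_sum B \<longleftrightarrow> sum_mset B = 0"

definition atom :: "'a::comm_monoid_add multiset \<Rightarrow> bool" where
  "atom B \<longleftrightarrow> B \<noteq> {#} \<and> zero_sum B \<and>
     \<not> (\<exists>C D. C \<noteq> {#} \<and> D \<noteq> {#} \<and> zero_sum C \<and> zero_sum D \<and> B = C + D)"

definition lengths :: "'a::comm_monoid_add multiset \<Rightarrow> nat set" where
  "lengths B = {k. \<exists>As :: 'a multiset list. length As = k \<and> (\<forall>A\<in>set As. atom A) \<and> sum_list As = B}"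

definition sets_of_lengths :: "'a::comm_monoid_add set \<Rightarrow> nat set set" where
  "sets_of_lengths G0 = {lengths B | B. set_mset B \<subseteq> G0 \<and> zero_sum B}"

definition is_AMP :: "int set \<Rightarrow> int \<Rightarrow> int set \<Rightarrow> bool" where
  "is_AMP L d D \<longleftrightarrow> d > 0 \<and> {0, d} \<subseteq> D \<and> D \<subseteq> {0..d} \<and> finite L \<and> L \<noteq> {} \<and>
     L = {x. \<exists>y\<in>D. \<exists>k::int. x = Min L + y + d * k} \<inter> {Min L..Max L}"

text \<open>C_6 is the numeral type 6 (integers mod 6); C_2^5 is the type 2^5 (vectors of length 5 over Z/2).\<close>

end

theory Submission
  imports Defs
begin


lemma mset_take_sub: "mset (take i xs) \<subseteq># mset xs"
proof -
  have "mset xs = mset (take i xs) + mset (drop i xs)"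
    by (metis append_take_drop_id mset_append)
  thus ?thesis by (metis mset_subset_eq_add_left)
qed

lemma mset_drop_sub: "mset (drop i xs) \<subseteq># mset xs"
proof -
  have "mset xs = mset (take i xs) + mset (drop i xs)"
    by (metis append_take_drop_id mset_append)
  thus ?thesis by (metis mset_subset_eq_add_right)
qed

lemma mset_seg_sub: "mset (take n (drop i xs)) \<subseteq># mset xs"
  by (meson mset_drop_sub mset_take_sub subset_mset.order_trans)

lemma sum_take_split:
  fixes xs :: "'a::comm_monoid_add list"
  assumes "i \<le> j"
  shows "sum_list (take j xs) = sum_list (take i xs) + sum_list (take (j - i) (drop i xs))"
proof -
  have "take j xs = take i xs @ take (j - i) (drop i xs)"
    using assms by (metis le_add_diff_inverse take_add)
  thus ?thesis by simp
qed

lemma atom_sub: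
  assumes "atom A" "C \<subseteq># A" "C \<noteq> {#}" "zero_sum C"
  shows "C = A"
proof (rule ccontr)
  assume ne: "C \<noteq> A"
  have AD: "A = C + (A - C)" using assms(2) by (simp add: subset_mset.add_diff_inverse)
  have "A - C \<noteq> {#}" using ne AD by auto
  moreover have "zero_sum (A - C)" using assms(1,4) AD unfolding atom_def zero_sum_def
    by (metis add_0 sum_mset.union)
  ultimately show False using assms(1,3,4) AD unfolding atom_def by blast
qed

lemma atom_ne: "atom A \<Longrightarrow> A \<noteq> {#}" by (simp add: atom_def)
lemma atom_zs: "atom A \<Longrightarrow> sum_mset A = 0" by (simp add: atom_def zero_sum_def)

lemma atom_zero: "atom A \<Longrightarrow> 0 \<in># A \<Longrightarrow> A = {#0#}"
  by (metis atom_sub empty_not_add_mset mset_subset_eq_single sum_mset.singleton zero_sum_def)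

lemma atom_single: "atom {#a#} \<longleftrightarrow> a = 0"
proof
  assume "atom {#a#}" thus "a = 0" by (simp add: atom_def zero_sum_def)
next
  assume "a = 0"
  thus "atom {#a#}" unfolding atom_def zero_sum_def
  proof (auto)
    fix C D :: "'a multiset" assume "C \<noteq> {#}" "D \<noteq> {#}" "{#0#} = C + D"
    hence "size C + size D = 1" "size C \<noteq> 0" "size D \<noteq> 0"
      by (metis size_single size_union, simp, simp)
    thus False by simp
  qed
qed

lemma atom_size1: "atom A \<Longrightarrow> size A = 1 \<Longrightarrow> A = {#0#}"
  by (metis atom_single size_1_singleton_mset)

lemma size_sum_list: "size (sum_list (As :: 'a multiset list)) = sum_list (map size As)"
  by (induct As) (auto simp: size_union)
lemma count_sum_list: "count (sum_list As) x = sum_list (map (\<lambda>A. count A x) As)"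
  by (induct As) auto
lemma sub_sum_list: "A \<in> set As \<Longrightarrow> A \<subseteq># sum_list As"
  by (induct As) (auto simp: mset_subset_eq_add_right subset_mset.order_trans)

lemma sum_list_mono_nat:
  "(\<And>A. A \<in> set As \<Longrightarrow> (f A :: nat) \<le> g A) \<Longrightarrow> sum_list (map f As) \<le> sum_list (map g As)"
  by (induct As) (auto intro: add_mono)

lemma sum_list_const: "sum_list (map (\<lambda>_. c) As) = c * length As"
  by (induct As) auto

lemma lengths_zero_sum:
  assumes "\<forall>A\<in>set As. atom A" shows "sum_mset (sum_list As) = 0"
  using assms by (induct As) (auto simp: atom_zs)


lemma six_cases: "(x::6) = 0 \<or> x = 1 \<or> x = 2 \<or> x = 3 \<or> x = 4 \<or> x = 5"
proof (induct x rule: bit0_induct)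
  case (of_int z)
  hence "z = 0 \<or> z = 1 \<or> z = 2 \<or> z = 3 \<or> z = 4 \<or> z = 5" by simp arith
  thus ?case by auto
qed

lemma card6: "card (UNIV :: 6 set) = 6" by simp

lemma dav6:
  fixes X :: "6 multiset"
  assumes "size X \<ge> 6"
  shows "\<exists>C. C \<subseteq># X \<and> C \<noteq> {#} \<and> sum_mset C = 0"
proof -
  obtain xs where xs: "mset xs = X" using ex_mset by blast
  have len: "length xs \<ge> 6" using assms xs by auto
  define p where "p i = sum_list (take i xs)" for i
  have "\<not> inj_on p {0..6}"
  proof
    assume "inj_on p {0..6}"
    hence "card {0..(6::nat)} \<le> card (UNIV :: 6 set)"
      by (meson card_inj_on_le finite subset_UNIV)
    thus False by simp
  qed
  then obtain i j where ij: "i \<in> {0..6}" "j \<in> {0..6}" "i \<noteq> j" "p i = p j"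
    unfolding inj_on_def by blast
  obtain a b where ab: "a < b" "b \<le> 6" "p a = p b"
  proof (cases "i < j")
    case True thus ?thesis using ij that by auto
  next
    case False thus ?thesis using ij that[of j i] by auto
  qed
  define C where "C = mset (take (b - a) (drop a xs))"
  have "p b = p a + sum_mset C"
    unfolding p_def C_def using sum_take_split[of a b xs] ab(1) by (simp add: sum_mset_sum_list)
  hence "sum_mset C = 0" using ab(3) by simp
  moreover have "C \<noteq> {#}" unfolding C_def using ab len by auto
  moreover have "C \<subseteq># X" unfolding C_def xs[symmetric] by (rule mset_seg_sub)
  ultimately show ?thesis by blast
qed

lemma atom6_size:
  fixes A :: "6 multiset"
  assumes "atom A" shows "size A \<le> 6"
proof (rule ccontr)
  assume "\<not> size A \<le> 6"
  hence big: "size A \<ge> 7" by simp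
  then obtain x where x: "x \<in># A" by (metis multiset_nonemptyE size_empty not_numeral_le_zero)
  have "size (A - {#x#}) \<ge> 6" using big x by (simp add: size_Diff_submset)
  then obtain C where C: "C \<subseteq># A - {#x#}" "C \<noteq> {#}" "sum_mset C = 0" using dav6 by blast
  have CA: "C \<subseteq># A" using C(1) by (meson diff_subset_eq_self subset_mset.order_trans)
  hence "C = A" using atom_sub[OF assms CA C(2)] C(3) by (simp add: zero_sum_def)
  hence "size C \<le> size A - 1" using C(1) x
    by (metis size_Diff_submset size_mset_mono single_subset_iff size_single)
  thus False using \<open>C = A\<close> big by simp
qed

lemma atom_small_nz:
  assumes "atom A" "C \<subseteq># A" "C \<noteq> {#}" "size C < size A"
  shows "sum_mset C \<noteq> 0"
  using atom_sub[OF assms(1-3)] assms(4) by (auto simp: zero_sum_def)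


lemma atom6_pair:
  fixes A :: "6 multiset"
  assumes at: "atom A" and s6: "size A = 6" and ab: "{#a, b#} \<subseteq># A"
  shows "a = b"
proof -
  define R where "R = A - {#a, b#}"
  have AR: "A = {#a, b#} + R" using ab unfolding R_def by (metis subset_mset.add_diff_inverse)
  obtain rs where rs: "mset rs = R" using ex_mset by blast
  have sR: "size R = 4" using s6 AR by simp
  have lrs: "length rs = 4" using sR rs by (metis size_mset)
  define q where "q i = a + b + sum_list (take i rs)" for i
  have small: "sum_mset C \<noteq> 0" if "C \<subseteq># A" "C \<noteq> {#}" "size C < 6" for C
    using atom_small_nz[OF at that(1,2)] that(3) s6 by simp
  have subR: "mset (take i rs) \<subseteq># R" for i using mset_take_sub rs by metis
  have segR: "mset (take n (drop i rs)) \<subseteq># R" for n i using mset_seg_sub rs by metis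
  have RA: "R \<subseteq># A" using AR by simp
  have inj: "inj_on q {0..3}"
  proof (rule inj_onI)
    fix i j assume ij: "i \<in> {0..3}" "j \<in> {0..3}" "q i = q j"
    show "i = j"
    proof (rule ccontr)
      assume "i \<noteq> j"
      then obtain x y where xy: "x < y" "y \<le> 3" "q x = q y" using ij
        by (metis atLeastAtMost_iff linorder_neqE_nat)
      define C where "C = mset (take (y - x) (drop x rs))"
      have "q y = q x + sum_mset C" unfolding q_def C_def
        using sum_take_split[of x y rs] xy(1) by (simp add: sum_mset_sum_list add.assoc)
      hence "sum_mset C = 0" using xy by simp
      moreover have "C \<noteq> {#}" unfolding C_def using xy lrs by auto
      moreover have "C \<subseteq># A" unfolding C_def using segR RA by (meson subset_mset.order_trans)
      moreover have "size C < 6" unfolding C_def using lrs by simp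
      ultimately show False using small by blast
    qed
  qed
  have Qsum: "q i = sum_mset ({#a, b#} + mset (take i rs))" for i
    unfolding q_def by (simp add: sum_mset_sum_list add.assoc)
  have sub2: "{#a, b#} + mset (take i rs) \<subseteq># A" for i
    using AR subR by (metis subset_mset.add_left_mono)
  have q0: "q i \<noteq> 0" if "i \<le> 3" for i
    using small[OF sub2[of i]] Qsum[of i] that lrs by simp
  have subb: "{#b#} + mset (take i rs) \<subseteq># A" for i
  proof -
    have "{#b#} \<subseteq># {#a, b#}" by simp
    hence "{#b#} + mset (take i rs) \<subseteq># {#a, b#} + mset (take i rs)"
      by (rule subset_mset.add_right_mono)
    thus ?thesis using sub2[of i] by (rule subset_mset.order_trans)
  qed
  have suba: "{#a#} + mset (take i rs) \<subseteq># A" for i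
  proof -
    have "{#a#} \<subseteq># {#a, b#}" by simp
    hence "{#a#} + mset (take i rs) \<subseteq># {#a, b#} + mset (take i rs)"
      by (rule subset_mset.add_right_mono)
    thus ?thesis using sub2[of i] by (rule subset_mset.order_trans)
  qed
  have qa: "q i \<noteq> a" if "i \<le> 3" for i
  proof
    assume "q i = a"
    hence "sum_mset ({#b#} + mset (take i rs)) = 0" unfolding q_def by (simp add: sum_mset_sum_list)
    thus False using small[OF subb[of i]] that lrs by simp
  qed
  have qb: "q i \<noteq> b" if "i \<le> 3" for i
  proof
    assume "q i = b"
    hence "sum_mset ({#a#} + mset (take i rs)) = 0" unfolding q_def
      by (simp add: sum_mset_sum_list add.commute add.left_commute)
    thus False using small[OF suba[of i]] that lrs by simp
  qed
  have a0: "a \<noteq> 0" using small[of "{#a#}"] suba[of 0] by simp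
  have b0: "b \<noteq> 0" using small[of "{#b#}"] subb[of 0] by simp
  define Q where "Q = q ` {0..3}"
  have cQ: "card Q = 4" unfolding Q_def using card_image[OF inj] by simp
  have aQ: "a \<notin> Q"
  proof
    assume "a \<in> Q" then obtain i where "i \<le> 3" "q i = a" unfolding Q_def by auto
    thus False using qa by blast
  qed
  have bQ: "b \<notin> Q"
  proof
    assume "b \<in> Q" then obtain i where "i \<le> 3" "q i = b" unfolding Q_def by auto
    thus False using qb by blast
  qed
  have sub: "insert a Q \<subseteq> UNIV - {0}" unfolding Q_def using q0 a0 by auto
  have c1: "card (insert a Q) = 5" using cQ aQ by (simp add: Q_def)
  have c2: "card (UNIV - {0::6}) = 5" by simp
  have "insert a Q = UNIV - {0}" using card_subset_eq[OF _ sub] c1 c2 by simp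
  hence "b \<in> insert a Q" using b0 by auto
  thus "a = b" using bQ by auto
qed


lemma mset_single_supp: "set_mset A \<subseteq> {g} \<Longrightarrow> A = replicate_mset (size A) g"
  by (induct A) auto

lemma rep_sub: "m \<le> n \<Longrightarrow> replicate_mset m g \<subseteq># replicate_mset n g"
  by (simp add: subseteq_mset_def)

lemma atom6_six:
  fixes A :: "6 multiset"
  assumes at: "atom A" and s6: "size A = 6"
  shows "set_mset A \<subseteq> {1, 5}"
proof -
  obtain g where g: "g \<in># A" using s6 by (metis multiset_nonemptyE size_empty zero_neq_numeral)
  have all: "x = g" if "x \<in># A" for x
  proof (rule ccontr)
    assume "x \<noteq> g"
    hence "x \<in># A - {#g#}" using that by (simp add: in_diff_count)
    hence "{#g, x#} \<subseteq># A" using g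
      by (simp add: insert_subset_eq_iff)
    thus False using atom6_pair[OF at s6] \<open>x \<noteq> g\<close> by blast
  qed
  hence sA: "set_mset A \<subseteq> {g}" by auto
  hence Ar: "A = replicate_mset 6 g" using mset_single_supp[OF sA] s6 by simp
  have bad: False if "n < 6" "0 < n" "of_nat n * g = 0" for n
  proof -
    have "replicate_mset n g \<subseteq># A" using Ar rep_sub[of n 6 g] that(1) by simp
    moreover have "replicate_mset n g \<noteq> {#}" using that(2) by simp
    moreover have "size (replicate_mset n g) < size A" using that(1) s6 by simp
    ultimately have "sum_mset (replicate_mset n g) \<noteq> 0" by (rule atom_small_nz[OF at])
    thus False using that(3) by (simp add: sum_mset_replicate_mset)
  qed
  have "g \<noteq> 0" using bad[of 1] by auto
  moreover have "g \<noteq> 2" using bad[of 3] by auto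
  moreover have "g \<noteq> 3" using bad[of 2] by auto
  moreover have "g \<noteq> 4" using bad[of 3] by auto
  ultimately have "g = 1 \<or> g = 5" using six_cases[of g] by blast
  thus ?thesis using sA by auto
qed

lemma atom6_15:
  fixes A :: "6 multiset"
  assumes at: "atom A" and sup: "set_mset A \<subseteq> {1, 5}"
  shows "size A = 2 \<or> size A = 6"
proof (cases "1 \<in># A \<and> 5 \<in># A")
  case True
  hence "{#1, 5#} \<subseteq># A" by (simp add: insert_subset_eq_iff in_diff_count)
  moreover have "zero_sum {#1, 5::6#}" by (simp add: zero_sum_def)
  ultimately have "{#1, 5#} = A" using atom_sub[OF at] by simp
  thus ?thesis by auto
next
  case False
  then obtain g where g: "g = 1 \<or> g = 5" "set_mset A \<subseteq> {g}" using sup by auto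
  have Ar: "A = replicate_mset (size A) g" using mset_single_supp[OF g(2)] .
  have le: "size A \<le> 6" using atom6_size[OF at] .
  have pos: "size A \<noteq> 0" using atom_ne[OF at] by simp
  have z: "of_nat (size A) * g = 0" using atom_zs[OF at] Ar sum_mset_replicate_mset[of "size A" g] by simp
  have "size A = 1 \<or> size A = 2 \<or> size A = 3 \<or> size A = 4 \<or> size A = 5 \<or> size A = 6"
    using le pos by linarith
  thus ?thesis using z g(1) by auto
qed


lemma c6_atom_ineq:
  fixes A :: "6 multiset"
  assumes at: "atom A"
  shows "size A + 5 * count A 0 \<le> 6 \<and> 2 \<le> size A + count A 0 \<and> count A 0 \<le> 1"
proof (cases "0 \<in># A")
  case True
  hence "A = {#0#}" using atom_zero[OF at] by blast
  thus ?thesis by simp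
next
  case False
  hence c0: "count A 0 = 0" by (simp add: not_in_iff)
  have "size A \<le> 6" using atom6_size[OF at] .
  moreover have "size A \<noteq> 0" using atom_ne[OF at] by (metis size_eq_0_iff_empty)
  moreover have "size A \<noteq> 1" using atom_size1[OF at] False by auto
  ultimately have "2 \<le> size A" by arith
  thus ?thesis using c0 \<open>size A \<le> 6\<close> by simp
qed

lemma sum_list_le_eq:
  "(\<And>A. A \<in> set As \<Longrightarrow> (f A :: nat) \<le> c) \<Longrightarrow> sum_list (map f As) = c * length As
    \<Longrightarrow> A \<in> set As \<Longrightarrow> f A = c"
proof (induct As)
  case Nil thus ?case by simp
next
  case (Cons a As)
  have le: "sum_list (map f As) \<le> c * length As"
    using sum_list_mono_nat[of As f "\<lambda>_. c"] Cons.prems(1) by (simp add: sum_list_const)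
  have "f a \<le> c" using Cons.prems(1) by simp
  hence fa: "f a = c" and rest: "sum_list (map f As) = c * length As"
    using Cons.prems(2) le by auto
  show ?case using Cons.prems(3) fa Cons.hyps[OF _ rest] Cons.prems(1) by auto
qed

lemma sum_list_26:
  "(\<And>A. A \<in> set As \<Longrightarrow> (f A :: nat) = 2 \<or> f A = 6) \<Longrightarrow> \<exists>T. sum_list (map f As) = 2 * length As + 4 * T"
proof (induct As)
  case Nil thus ?case by simp
next
  case (Cons a As)
  then obtain T where T: "sum_list (map f As) = 2 * length As + 4 * T" by auto
  have "f a = 2 \<or> f a = 6" using Cons.prems by simp
  thus ?case
  proof
    assume "f a = 2" thus ?case using T by (intro exI[of _ T]) simp
  next
    assume "f a = 6" thus ?case using T by (intro exI[of _ "T + 1"]) simp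
  qed
qed

lemma sum_list_add_nat: "sum_list (map (\<lambda>A. (f A :: nat) + g A) As) = sum_list (map f As) + sum_list (map g As)"
  by (induct As) auto

lemma sum_list_cmul: "sum_list (map (\<lambda>A. c * (f A :: nat)) As) = c * sum_list (map f As)"
  by (induct As) (auto simp: algebra_simps)

lemma in_sum_list: "x \<in># sum_list As \<Longrightarrow> \<exists>A\<in>set As. x \<in># A"
  by (induct As) auto

lemma lengthsE:
  assumes "k \<in> lengths B"
  obtains As where "length As = k" "\<forall>A\<in>set As. atom A" "sum_list As = B"
  using assms unfolding lengths_def by blast

lemma c6_bound:
  fixes B :: "6 multiset"
  assumes k1: "k1 \<in> lengths B" and k2: "k2 \<in> lengths B"
  shows "2 * k2 + 4 * count B 0 \<le> 6 * k1 \<and> size B + 5 * count B 0 \<le> 6 * k1 \<and> 2 * k2 \<le> size B + count B 0"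
proof -
  obtain As1 where A1: "length As1 = k1" "\<forall>A\<in>set As1. atom A" "sum_list As1 = B" using k1 by (rule lengthsE)
  obtain As2 where A2: "length As2 = k2" "\<forall>A\<in>set As2. atom A" "sum_list As2 = B" using k2 by (rule lengthsE)
  have "sum_list (map (\<lambda>A. size A + 5 * count A 0) As1) \<le> sum_list (map (\<lambda>_. 6) As1)"
    by (rule sum_list_mono_nat) (use A1(2) c6_atom_ineq in blast)
  moreover have "size B = sum_list (map size As1)" using size_sum_list[of As1] A1(3) by simp
  moreover have "count B 0 = sum_list (map (\<lambda>A. count A 0) As1)" using count_sum_list[of As1] A1(3) by simp
  ultimately have i1: "size B + 5 * count B 0 \<le> 6 * k1"
    using A1 by (simp add: sum_list_add_nat sum_list_cmul sum_list_const)
  have "sum_list (map (\<lambda>_. 2) As2) \<le> sum_list (map (\<lambda>A. size A + count A 0) As2)"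
    by (rule sum_list_mono_nat) (use A2(2) c6_atom_ineq in blast)
  moreover have "size B = sum_list (map size As2)" using size_sum_list[of As2] A2(3) by simp
  moreover have "count B 0 = sum_list (map (\<lambda>A. count A 0) As2)" using count_sum_list[of As2] A2(3) by simp
  ultimately have i2: "2 * k2 \<le> size B + count B 0"
    using A2 by (simp add: sum_list_add_nat sum_list_const)
  show ?thesis using i1 i2 by simp
qed

lemma c6_extremal:
  fixes B :: "6 multiset"
  assumes k1: "k1 \<in> lengths B" and k2: "3 * k1 \<in> lengths B" and k3: "k1 + 3 \<in> lengths B"
  shows False
proof -
  have bb: "2 * (3 * k1) + 4 * count B 0 \<le> 6 * k1 \<and> size B + 5 * count B 0 \<le> 6 * k1
    \<and> 2 * (3*k1) \<le> size B + count B 0" by (rule c6_bound[OF k1 k2])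
  note b = bb[THEN conjunct1] bb[THEN conjunct2, THEN conjunct1] bb[THEN conjunct2, THEN conjunct2]
  hence z: "count B 0 = 0" by linarith
  have sB: "size B = 6 * k1" using b z by linarith
  obtain As1 where A1: "length As1 = k1" "\<forall>A\<in>set As1. atom A" "sum_list As1 = B" using k1 by (rule lengthsE)
  have c0: "count A 0 = 0" if "A \<in> set As1" for A
  proof -
    have "A \<subseteq># B" using sub_sum_list[OF that] A1(3) by simp
    thus ?thesis using z mset_subset_eq_count[of A B 0] by simp
  qed
  have s6: "size A = 6" if "A \<in> set As1" for A
  proof (rule sum_list_le_eq[of As1 size 6])
    show "size A \<le> 6" if "A \<in> set As1" for A using atom6_size A1(2) that by blast
    show "sum_list (map size As1) = 6 * length As1" using sB A1 size_sum_list[of As1] by simp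
    show "A \<in> set As1" by fact
  qed
  have supB: "set_mset B \<subseteq> {1, 5}"
  proof
    fix x assume "x \<in># B"
    hence "x \<in># sum_list As1" unfolding A1(3) .
    from in_sum_list[OF this] obtain A where A: "A \<in> set As1" "x \<in># A" by blast
    have "atom A" using A1(2) A(1) by blast
    hence "set_mset A \<subseteq> {1, 5}" using atom6_six[of A] s6[OF A(1)] by blast
    thus "x \<in> {1, 5}" using A(2) by blast
  qed
  obtain As3 where A3: "length As3 = k1 + 3" "\<forall>A\<in>set As3. atom A" "sum_list As3 = B" using k3 by (rule lengthsE)
  have m4: "size A = 2 \<or> size A = 6" if "A \<in> set As3" for A
  proof -
    have "A \<subseteq># B" using sub_sum_list[OF that] A3(3) by simp
    hence "set_mset A \<subseteq> {1, 5}" using supB by (meson mset_subset_eqD subset_iff)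
    thus ?thesis using atom6_15[of A] A3(2) that by blast
  qed
  obtain T where "sum_list (map size As3) = 2 * length As3 + 4 * T" using sum_list_26[of As3 size] m4 by blast
  hence "6 * k1 = 2 * (k1 + 3) + 4 * T" using A3 sB size_sum_list[of As3] by simp
  thus False by presburger
qed


lemma five_cases: "(x::5) = 0 \<or> x = 1 \<or> x = 2 \<or> x = 3 \<or> x = 4"
proof (induct x rule: bit1_induct)
  case (of_int z)
  hence "z = 0 \<or> z = 1 \<or> z = 2 \<or> z = 3 \<or> z = 4" by simp arith
  thus ?case by auto
qed

lemma two_cases: "(x::2) = 0 \<or> x = 1"
proof (induct x rule: bit0_induct)
  case (of_int z)
  hence "z = 0 \<or> z = 1" by simp arith
  thus ?case by auto
qed

lemma all5: "(\<forall>i::5. P i) \<longleftrightarrow> P 0 \<and> P 1 \<and> P 2 \<and> P 3 \<and> P 4"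
  using five_cases by metis

lemma vec25_eq: "(x :: 2^5) = y \<longleftrightarrow> x$0 = y$0 \<and> x$1 = y$1 \<and> x$2 = y$2 \<and> x$3 = y$3 \<and> x$4 = y$4"
  by (simp add: vec_eq_iff all5)

lemma dbl25: "(x :: 2^5) + x = 0"
proof -
  have "y + y = 0" for y :: 2 using two_cases[of y] by auto
  thus ?thesis by (simp add: vec_eq_iff)
qed

definition ee :: "5 \<Rightarrow> 2^5" where "ee k = (\<chi> i. if i = k then 1 else 0)"
definition e1 :: "2^5" where "e1 = ee 0"
definition e2 :: "2^5" where "e2 = ee 1"
definition e3 :: "2^5" where "e3 = ee 2"
definition e4 :: "2^5" where "e4 = ee 3"
definition e5 :: "2^5" where "e5 = ee 4"
definition eo :: "2^5" where "eo = (\<chi> i. 1)"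
definition ff :: "2^5" where "ff = (\<chi> i. if i = 0 \<or> i = 1 then 1 else 0)"

lemmas vdefs = e1_def e2_def e3_def e4_def e5_def eo_def ff_def ee_def

lemma distinct_vecs:
  "distinct [0, e1, e2, e3, e4, e5, eo, ff]"
  by (simp add: vdefs vec25_eq)

lemma neqs [simp]:
  "0 \<noteq> e1"
  "0 \<noteq> e2"
  "0 \<noteq> e3"
  "0 \<noteq> e4"
  "0 \<noteq> e5"
  "0 \<noteq> eo"
  "0 \<noteq> ff"
  "e1 \<noteq> 0"
  "e1 \<noteq> e2"
  "e1 \<noteq> e3"
  "e1 \<noteq> e4"
  "e1 \<noteq> e5"
  "e1 \<noteq> eo"
  "e1 \<noteq> ff"
  "e2 \<noteq> 0"
  "e2 \<noteq> e1"
  "e2 \<noteq> e3"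
  "e2 \<noteq> e4"
  "e2 \<noteq> e5"
  "e2 \<noteq> eo"
  "e2 \<noteq> ff"
  "e3 \<noteq> 0"
  "e3 \<noteq> e1"
  "e3 \<noteq> e2"
  "e3 \<noteq> e4"
  "e3 \<noteq> e5"
  "e3 \<noteq> eo"
  "e3 \<noteq> ff"
  "e4 \<noteq> 0"
  "e4 \<noteq> e1"
  "e4 \<noteq> e2"
  "e4 \<noteq> e3"
  "e4 \<noteq> e5"
  "e4 \<noteq> eo"
  "e4 \<noteq> ff"
  "e5 \<noteq> 0"
  "e5 \<noteq> e1"
  "e5 \<noteq> e2"
  "e5 \<noteq> e3"
  "e5 \<noteq> e4"
  "e5 \<noteq> eo"
  "e5 \<noteq> ff"
  "eo \<noteq> 0"
  "eo \<noteq> e1"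
  "eo \<noteq> e2"
  "eo \<noteq> e3"
  "eo \<noteq> e4"
  "eo \<noteq> e5"
  "eo \<noteq> ff"
  "ff \<noteq> 0"
  "ff \<noteq> e1"
  "ff \<noteq> e2"
  "ff \<noteq> e3"
  "ff \<noteq> e4"
  "ff \<noteq> e5"
  "ff \<noteq> eo"
  using distinct_vecs by auto

definition UU :: "(2^5) multiset" where "UU = {#e1, e2, e3, e4, e5, eo#}"
definition RR :: "(2^5) multiset" where "RR = {#e1, e2, ff#}"
definition WW :: "(2^5) multiset" where "WW = {#ff, e3, e4, e5, eo#}"

definition mk :: "bool \<Rightarrow> bool \<Rightarrow> bool \<Rightarrow> bool \<Rightarrow> bool \<Rightarrow> bool \<Rightarrow> bool \<Rightarrow> (2^5) multiset" where
  "mk b1 b2 b3 b4 b5 bo bf = (if b1 then {#e1#} else {#}) + (if b2 then {#e2#} else {#}) +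
     (if b3 then {#e3#} else {#}) + (if b4 then {#e4#} else {#}) + (if b5 then {#e5#} else {#}) +
     (if bo then {#eo#} else {#}) + (if bf then {#ff#} else {#})"

lemma sum_mk: "sum_mset (mk b1 b2 b3 b4 b5 bo bf) = (if b1 then e1 else 0) + (if b2 then e2 else 0) +
     (if b3 then e3 else 0) + (if b4 then e4 else 0) + (if b5 then e5 else 0) +
     (if bo then eo else 0) + (if bf then ff else 0)"
  unfolding mk_def by simp

lemma K0:
  assumes "sum_mset (mk b1 b2 b3 b4 b5 bo bf) = 0"
  shows "mk b1 b2 b3 b4 b5 bo bf = {#} \<or> mk b1 b2 b3 b4 b5 bo bf = UU \<or>
         mk b1 b2 b3 b4 b5 bo bf = RR \<or> mk b1 b2 b3 b4 b5 bo bf = WW"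
  using assms unfolding sum_mk
  by (cases b1; cases b2; cases b3; cases b4; cases b5; cases bo; cases bf)
     (simp_all add: vec25_eq vdefs mk_def UU_def RR_def WW_def)

definition SS :: "(2^5) set" where "SS = {e1, e2, e3, e4, e5, eo, ff}"

lemma mk_decomp:
  assumes c1: "\<And>x. count A x \<le> 1" and sup: "set_mset A \<subseteq> SS"
  shows "A = mk (e1 \<in># A) (e2 \<in># A) (e3 \<in># A) (e4 \<in># A) (e5 \<in># A) (eo \<in># A) (ff \<in># A)"
proof (rule multiset_eqI)
  fix x
  have "count A x = 0 \<or> count A x = 1" using c1[of x] by arith
  hence cx: "count A x = (if x \<in># A then 1 else 0)" by (metis count_eq_zero_iff)
  show "count A x = count (mk (e1 \<in># A) (e2 \<in># A) (e3 \<in># A) (e4 \<in># A) (e5 \<in># A) (eo \<in># A) (ff \<in># A)) x"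
  proof (cases "x \<in> SS")
    case True
    thus ?thesis unfolding SS_def mk_def using cx by auto
  next
    case False
    hence "x \<notin># A" using sup by auto
    thus ?thesis using False unfolding SS_def mk_def by (auto simp: not_in_iff)
  qed
qed

lemma Ksq:
  assumes c1: "\<And>x. count A x \<le> 1" and sup: "set_mset A \<subseteq> SS" and z: "sum_mset A = 0"
  shows "A = {#} \<or> A = UU \<or> A = RR \<or> A = WW"
  using K0 z mk_decomp[OF c1 sup] by metis

lemma sizes: "size UU = 6" "size RR = 3" "size WW = 5"
  by (simp_all add: UU_def RR_def WW_def)

lemma sums0: "sum_mset UU = 0" "sum_mset RR = 0" "sum_mset WW = 0"
  by (simp_all add: UU_def RR_def WW_def vec25_eq vdefs)

lemma sq_UU: "\<And>x. count UU x \<le> 1" and sq_RR: "\<And>x. count RR x \<le> 1" and sq_WW: "\<And>x. count WW x \<le> 1"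
  by (auto simp: UU_def RR_def WW_def)

lemma supp_UU: "set_mset UU \<subseteq> SS" and supp_RR: "set_mset RR \<subseteq> SS" and supp_WW: "set_mset WW \<subseteq> SS"
  by (auto simp: UU_def RR_def WW_def SS_def)

lemma sub_Ksq:
  assumes "C \<subseteq># A" "\<And>x. count A x \<le> 1" "set_mset A \<subseteq> SS" "sum_mset C = 0"
  shows "C = {#} \<or> C = UU \<or> C = RR \<or> C = WW"
proof (rule Ksq)
  show "count C x \<le> 1" for x using assms(1,2) by (meson mset_subset_eq_count order_trans)
  show "set_mset C \<subseteq> SS" using assms(1,3) by (meson mset_subset_eqD subset_iff)
  show "sum_mset C = 0" by fact
qed

lemma atom_of_sq:
  assumes "\<And>x. count A x \<le> 1" "set_mset A \<subseteq> SS" "sum_mset A = 0"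
    and "A \<noteq> {#}" and sub: "\<And>C. C \<subseteq># A \<Longrightarrow> C \<in> {UU, RR, WW} \<Longrightarrow> C = A"
  shows "atom A"
  unfolding atom_def zero_sum_def
proof (intro conjI)
  show "A \<noteq> {#}" by fact
  show "sum_mset A = 0" by fact
  show "\<not> (\<exists>C D. C \<noteq> {#} \<and> D \<noteq> {#} \<and> sum_mset C = 0 \<and> sum_mset D = 0 \<and> A = C + D)"
  proof
  assume "\<exists>C D. C \<noteq> {#} \<and> D \<noteq> {#} \<and> sum_mset C = 0 \<and> sum_mset D = 0 \<and> A = C + D"
  then obtain C D where CD: "C \<noteq> {#}" "D \<noteq> {#}" "sum_mset C = 0" "A = C + D" by blast
  have "C \<subseteq># A" using CD(4) by simp
  hence "C = {#} \<or> C = UU \<or> C = RR \<or> C = WW" using sub_Ksq assms(1,2) CD(3) by blast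
  hence "C = A" using sub[OF \<open>C \<subseteq># A\<close>] CD(1) by blast
  thus False using CD(2,4) by simp
  qed
qed

lemma atom_UU: "atom UU"
proof (rule atom_of_sq[OF sq_UU supp_UU sums0(1)])
  show "UU \<noteq> {#}" by (simp add: UU_def)
  fix C assume "C \<subseteq># UU" "C \<in> {UU, RR, WW}"
  moreover have "\<not> RR \<subseteq># UU" "\<not> WW \<subseteq># UU"
    by (auto simp: RR_def WW_def UU_def dest!: mset_subset_eqD[of _ _ ff])
  ultimately show "C = UU" by blast
qed

lemma atom_RR: "atom RR"
proof (rule atom_of_sq[OF sq_RR supp_RR sums0(2)])
  show "RR \<noteq> {#}" by (simp add: RR_def)
  fix C assume "C \<subseteq># RR" "C \<in> {UU, RR, WW}"
  moreover have "\<not> UU \<subseteq># RR" "\<not> WW \<subseteq># RR"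
    using size_mset_mono[of UU RR] size_mset_mono[of WW RR] sizes by auto
  ultimately show "C = RR" by blast
qed

lemma atom_WW: "atom WW"
proof (rule atom_of_sq[OF sq_WW supp_WW sums0(3)])
  show "WW \<noteq> {#}" by (simp add: WW_def)
  fix C assume "C \<subseteq># WW" "C \<in> {UU, RR, WW}"
  moreover have "\<not> UU \<subseteq># WW" using size_mset_mono[of UU WW] sizes by auto
  moreover have "\<not> RR \<subseteq># WW"
    by (auto simp: RR_def WW_def dest!: mset_subset_eqD[of _ _ e1])
  ultimately show "C = WW" by blast
qed

lemma atom_dbl:
  fixes g :: "2^5"
  assumes "g \<noteq> 0" shows "atom {#g, g#}"
  unfolding atom_def zero_sum_def
proof (intro conjI)
  show "{#g, g#} \<noteq> {#}" by simp
  show "sum_mset {#g, g#} = 0" using dbl25[of g] by simp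
  show "\<not> (\<exists>C D. C \<noteq> {#} \<and> D \<noteq> {#} \<and> sum_mset C = 0 \<and> sum_mset D = 0 \<and> {#g, g#} = C + D)"
  proof
  assume "\<exists>C D. C \<noteq> {#} \<and> D \<noteq> {#} \<and> sum_mset C = 0 \<and> sum_mset D = 0 \<and> {#g, g#} = C + D"
  then obtain C D where CD: "C \<noteq> {#}" "D \<noteq> {#}" "sum_mset C = 0" "{#g, g#} = C + D" by blast
  have "size {#g, g#} = size (C + D)" using CD(4) by (rule arg_cong)
  hence "size C + size D = 2" by simp
  moreover have "size C \<noteq> 0" "size D \<noteq> 0" using CD(1,2) by auto
  ultimately have "size C = 1" by linarith
  then obtain a where "C = {#a#}" by (metis size_1_singleton_mset)
  moreover hence "a \<in># {#g, g#}" using CD(4) by simp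
  moreover hence "a = g" by simp
  ultimately show False using CD(3) assms by simp
  qed
qed


lemma dbl_sub: "{#g, g#} \<subseteq># A \<longleftrightarrow> 2 \<le> count A g"
  by (auto simp: subseteq_mset_def)

lemma atom_cls:
  assumes at: "atom A" and sup: "set_mset A \<subseteq> insert 0 SS"
  shows "A = {#0#} \<or> (\<exists>g\<in>SS. A = {#g, g#}) \<or> A = UU \<or> A = RR \<or> A = WW"
proof (cases "0 \<in># A")
  case True
  have "A = {#0#}" by (rule atom_zero[OF at True])
  thus ?thesis by (rule disjI1)
next
  case n0: False
  show ?thesis
  proof (cases "\<exists>g. 2 \<le> count A g")
    case True
    then obtain g where g: "2 \<le> count A g" by blast
    hence sub: "{#g, g#} \<subseteq># A" by (simp add: dbl_sub)
    have "zero_sum {#g, g#}" using dbl25[of g] by (simp add: zero_sum_def)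
    hence eq: "{#g, g#} = A" using atom_sub[OF at sub] by simp
    have "g \<in># A"
    proof (rule ccontr)
      assume "g \<notin># A" hence "count A g = 0" by (simp add: not_in_iff)
      thus False using g by simp
    qed
    hence "g \<in> SS" using sup n0 by auto
    hence "\<exists>g\<in>SS. A = {#g, g#}" using eq by (intro bexI[of _ g]) simp_all
    thus ?thesis by (intro disjI2 disjI1)
  next
    case False
    hence c1: "count A x \<le> 1" for x by (metis One_nat_def Suc_1 less_Suc_eq_le not_le)
    have "set_mset A \<subseteq> SS" using sup n0 by auto
    hence "A = {#} \<or> A = UU \<or> A = RR \<or> A = WW" using Ksq[OF c1 _ atom_zs[OF at]] by simp
    moreover have "A \<noteq> {#}" by (rule atom_ne[OF at])
    ultimately have "A = UU \<or> A = RR \<or> A = WW" by simp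
    thus ?thesis by fast
  qed
qed

definition iU :: "(2^5) multiset \<Rightarrow> nat" where "iU A = (if size A = 6 then 1 else 0)"
definition iR :: "(2^5) multiset \<Rightarrow> nat" where "iR A = (if size A = 3 then 1 else 0)"
definition iW :: "(2^5) multiset \<Rightarrow> nat" where "iW A = (if size A = 5 then 1 else 0)"

definition PF :: "(2^5) multiset \<Rightarrow> bool" where
  "PF A \<longleftrightarrow> iR A + iW A \<le> count A ff \<and> even (count A ff - iR A - iW A) \<and>
     iU A + iR A \<le> count A e1 \<and> even (count A e1 - iU A - iR A) \<and>
     iU A + iW A \<le> count A e3 \<and> even (count A e3 - iU A - iW A) \<and>
     count A 0 + size A = 2 + 4 * iU A + iR A + 3 * iW A"

lemma PF_0: "PF {#0#}" by (simp add: PF_def iU_def iR_def iW_def)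
lemma PF_UU: "PF UU" by (simp add: PF_def iU_def iR_def iW_def UU_def)
lemma PF_RR: "PF RR" by (simp add: PF_def iU_def iR_def iW_def RR_def)
lemma PF_WW: "PF WW" by (simp add: PF_def iU_def iR_def iW_def WW_def)
lemma PF_dbl: "g \<in> SS \<Longrightarrow> PF {#g, g#}"
  unfolding SS_def by (auto simp: PF_def iU_def iR_def iW_def)

lemma atom_PF: assumes "atom A" "set_mset A \<subseteq> insert 0 SS" shows "PF A"
proof -
  have "A = {#0#} \<or> (\<exists>g\<in>SS. A = {#g, g#}) \<or> A = UU \<or> A = RR \<or> A = WW"
    by (rule atom_cls[OF assms])
  thus ?thesis
  proof (elim disjE)
    assume "\<exists>g\<in>SS. A = {#g, g#}"
    then obtain g where "g \<in> SS" "A = {#g, g#}" by blast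
    thus ?thesis using PF_dbl by simp
  qed (simp_all add: PF_0 PF_UU PF_RR PF_WW)
qed


definition Bt :: "nat \<Rightarrow> nat \<Rightarrow> (2^5) multiset" where
  "Bt z j = replicate_mset z 0 + replicate_mset (j - 1) e1 + replicate_mset (j - 1) e2 + {#ff#} +
     replicate_mset j e3 + replicate_mset j e4 + replicate_mset j e5 + replicate_mset j eo"

lemma Bt_count: "count (Bt z j) 0 = z" "count (Bt z j) ff = 1" "count (Bt z j) e1 = j - 1"
  "count (Bt z j) e3 = j"
  by (simp_all add: Bt_def)

lemma Bt_size: "size (Bt z j) = z + 2 * (j - 1) + 1 + 4 * j"
  by (simp add: Bt_def)

lemma Bt_supp: "set_mset (Bt z j) \<subseteq> insert 0 SS"
  by (auto simp: Bt_def SS_def split: if_splits)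

lemma add_nat2: "sum_list (map (\<lambda>A. (f A :: nat) + g A) As) = sum_list (map f As) + sum_list (map g As)"
  by (induct As) auto

lemma cmul2: "sum_list (map (\<lambda>A. c * (f A :: nat)) As) = c * sum_list (map f As)"
  by (induct As) (auto simp: algebra_simps)

lemma sum_even:
  "(\<And>A. A \<in> set As \<Longrightarrow> (Q A :: nat) \<le> P A \<and> even (P A - Q A)) \<Longrightarrow>
    sum_list (map Q As) \<le> sum_list (map P As) \<and> even (sum_list (map P As) - sum_list (map Q As))"
proof (induct As)
  case Nil thus ?case by simp
next
  case (Cons a As)
  have h: "Q a \<le> P a" "even (P a - Q a)" using Cons.prems by auto
  have ih: "sum_list (map Q As) \<le> sum_list (map P As)" "even (sum_list (map P As) - sum_list (map Q As))"
    using Cons by auto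
  have "(P a + sum_list (map P As)) - (Q a + sum_list (map Q As)) =
        (P a - Q a) + (sum_list (map P As) - sum_list (map Q As))" using h(1) ih(1) by simp
  thus ?case using h ih by simp
qed

lemma upper:
  assumes "k \<in> lengths (Bt z j)"
  shows "\<exists>u r w. r + w = 1 \<and> u + r \<le> j - 1 \<and> even (j - 1 - (u + r)) \<and> u + w \<le> j \<and>
     even (j - (u + w)) \<and> 2 * k + 4 * u + r + 3 * w = 2 * z + 2 * (j - 1) + 1 + 4 * j"
proof -
  obtain As where As: "length As = k" "\<forall>A\<in>set As. atom A" "sum_list As = Bt z j"
    using assms unfolding lengths_def by blast
  have PF: "PF A" if "A \<in> set As" for A
  proof (rule atom_PF)
    show "atom A" using As(2) that by blast
    have "A \<subseteq># Bt z j" using sub_sum_list[OF that] unfolding As(3) .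
    thus "set_mset A \<subseteq> insert 0 SS" using Bt_supp by (meson mset_subset_eqD subset_iff)
  qed
  define u where "u = sum_list (map iU As)"
  define r where "r = sum_list (map iR As)"
  define w where "w = sum_list (map iW As)"
  have cnt: "count (Bt z j) x = sum_list (map (\<lambda>A. count A x) As)" for x
    using count_sum_list[of As x] unfolding As(3) .
  have f1: "sum_list (map (\<lambda>A. iR A + iW A) As) \<le> sum_list (map (\<lambda>A. count A ff) As) \<and>
     even (sum_list (map (\<lambda>A. count A ff) As) - sum_list (map (\<lambda>A. iR A + iW A) As))"
    by (rule sum_even) (use PF in \<open>auto simp: PF_def\<close>)
  hence f: "r + w \<le> 1 \<and> even (1 - (r + w))"
    unfolding add_nat2 r_def[symmetric] w_def[symmetric] cnt[of ff, symmetric] Bt_count(2) .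
  have g1: "sum_list (map (\<lambda>A. iU A + iR A) As) \<le> sum_list (map (\<lambda>A. count A e1) As) \<and>
     even (sum_list (map (\<lambda>A. count A e1) As) - sum_list (map (\<lambda>A. iU A + iR A) As))"
    by (rule sum_even) (use PF in \<open>auto simp: PF_def\<close>)
  hence g: "u + r \<le> j - 1 \<and> even (j - 1 - (u + r))"
    unfolding add_nat2 u_def[symmetric] r_def[symmetric] cnt[of e1, symmetric] Bt_count(3) .
  have h1: "sum_list (map (\<lambda>A. iU A + iW A) As) \<le> sum_list (map (\<lambda>A. count A e3) As) \<and>
     even (sum_list (map (\<lambda>A. count A e3) As) - sum_list (map (\<lambda>A. iU A + iW A) As))"
    by (rule sum_even) (use PF in \<open>auto simp: PF_def\<close>)
  hence h: "u + w \<le> j \<and> even (j - (u + w))"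
    unfolding add_nat2 u_def[symmetric] w_def[symmetric] cnt[of e3, symmetric] Bt_count(4) .
  have "map (\<lambda>A. count A 0 + size A) As = map (\<lambda>A. 2 + (4 * iU A + (iR A + 3 * iW A))) As"
    by (rule map_cong) (use PF in \<open>simp_all add: PF_def\<close>)
  hence "sum_list (map (\<lambda>A. count A 0 + size A) As) = sum_list (map (\<lambda>A. 2 + (4 * iU A + (iR A + 3 * iW A))) As)"
    by (rule arg_cong)
  hence "sum_list (map (\<lambda>A. count A 0) As) + sum_list (map size As) = 2 * k + 4 * u + r + 3 * w"
    unfolding add_nat2 cmul2 u_def r_def w_def using As(1) by (simp add: sum_list_const)
  moreover have "sum_list (map size As) = size (Bt z j)" using size_sum_list[of As] unfolding As(3) by simp
  ultimately have l: "2 * k + 4 * u + r + 3 * w = 2 * z + 2 * (j - 1) + 1 + 4 * j"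
    using cnt[of 0] Bt_count(1)[of z j] Bt_size[of z j] by simp
  have "r + w = 1" using f by presburger
  thus ?thesis using g h l by blast
qed


lemma sum_map_rep: "sum_list (map f (replicate n a)) = n * (f a :: nat)"
  by (induct n) auto

lemma count_rep: "count (sum_list (replicate n A)) x = n * count A x"
  by (induct n) auto

lemma lower:
  assumes rw: "r + w = 1" and c1: "u + r \<le> j - 1" "even (j - 1 - (u + r))"
    and c3: "u + w \<le> j" "even (j - (u + w))"
    and len: "2 * k + 4 * u + r + 3 * w = 2 * z + 2 * (j - 1) + 1 + 4 * j"
  shows "k \<in> lengths (Bt z j)"
proof -
  define s1 where "s1 = (j - 1 - (u + r)) div 2"
  define s3 where "s3 = (j - (u + w)) div 2"
  have s1e: "2 * s1 = j - 1 - (u + r)" using c1 unfolding s1_def by simp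
  have s3e: "2 * s3 = j - (u + w)" using c3 unfolding s3_def by simp
  define X where "X = (if r = 1 then RR else WW)"
  define As where "As = replicate z {#0#} @ [X] @ replicate u UU @ replicate s1 {#e1, e1#} @
    replicate s1 {#e2, e2#} @ replicate s3 {#e3, e3#} @ replicate s3 {#e4, e4#} @
    replicate s3 {#e5, e5#} @ replicate s3 {#eo, eo#}"
  have "length As = z + 1 + u + 2 * s1 + 4 * s3" unfolding As_def by simp
  hence lenA: "length As = k" using s1e s3e len rw c1 c3 by linarith
  have atX: "atom X" unfolding X_def using atom_RR atom_WW by simp
  have atoms: "\<forall>A\<in>set As. atom A"
    unfolding As_def using atX atom_UU atom_dbl atom_single[of "0::2^5"] by auto
  have sumA: "sum_list As = Bt z j"
  proof (rule multiset_eqI)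
    fix x
    have cA: "count (sum_list As) x = z * count {#0#} x + count X x + u * count UU x +
      s1 * count {#e1, e1#} x + s1 * count {#e2, e2#} x + s3 * count {#e3, e3#} x +
      s3 * count {#e4, e4#} x + s3 * count {#e5, e5#} x + s3 * count {#eo, eo#} x"
      unfolding As_def sum_list_append by (simp add: count_rep add.assoc del: sum_list_replicate)
    have cB: "count (Bt z j) x = (if x = 0 then z else 0) + (if x = e1 then j - 1 else 0) +
      (if x = e2 then j - 1 else 0) + (if x = ff then 1 else 0) + (if x = e3 then j else 0) +
      (if x = e4 then j else 0) + (if x = e5 then j else 0) + (if x = eo then j else 0)"
      unfolding Bt_def by simp
    have rX: "count X x = (if r = 1 then count RR x else count WW x)" unfolding X_def by simp
    consider "x = 0" | "x = e1" | "x = e2" | "x = e3" | "x = e4" | "x = e5" | "x = eo" | "x = ff"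
      | "x \<notin> insert 0 SS" unfolding SS_def by blast
    thus "count (sum_list As) x = count (Bt z j) x"
    proof cases
      case 1 thus ?thesis unfolding cA cB rX by (simp add: UU_def RR_def WW_def; linarith)
    next
      case 2 thus ?thesis unfolding cA cB rX using s1e rw c1 by (simp add: UU_def RR_def WW_def; linarith)
    next
      case 3 thus ?thesis unfolding cA cB rX using s1e rw c1 by (simp add: UU_def RR_def WW_def; linarith)
    next
      case 4 thus ?thesis unfolding cA cB rX using s3e rw c3 by (simp add: UU_def RR_def WW_def; linarith)
    next
      case 5 thus ?thesis unfolding cA cB rX using s3e rw c3 by (simp add: UU_def RR_def WW_def; linarith)
    next
      case 6 thus ?thesis unfolding cA cB rX using s3e rw c3 by (simp add: UU_def RR_def WW_def; linarith)
    next
      case 7 thus ?thesis unfolding cA cB rX using s3e rw c3 by (simp add: UU_def RR_def WW_def; linarith)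
    next
      case 8 thus ?thesis unfolding cA cB rX using rw by (simp add: UU_def RR_def WW_def; linarith)
    next
      case 9
      hence "x \<noteq> 0" "x \<noteq> e1" "x \<noteq> e2" "x \<noteq> e3" "x \<noteq> e4" "x \<noteq> e5" "x \<noteq> eo" "x \<noteq> ff"
        unfolding SS_def by auto
      thus ?thesis unfolding cA cB rX by (simp add: UU_def RR_def WW_def)
    qed
  qed
  show ?thesis unfolding lengths_def using lenA atoms sumA by blast
qed


lemma len_Bt:
  assumes j1: "1 \<le> j"
  shows "x \<in> lengths (Bt z j) \<longleftrightarrow>
    (\<exists>b. 2 * b \<le> j - 1 \<and> x = z + j + 4 * b) \<or> (\<exists>a. 2 * a + 2 \<le> j \<and> x = z + j + 3 + 4 * a)"
proof
  assume "x \<in> lengths (Bt z j)"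
  then obtain u r w where c: "r + w = 1" "u + r \<le> j - 1" "even (j - 1 - (u + r))" "u + w \<le> j"
    "even (j - (u + w))" "2 * x + 4 * u + r + 3 * w = 2 * z + 2 * (j - 1) + 1 + 4 * j"
    using upper by blast
  show "(\<exists>b. 2 * b \<le> j - 1 \<and> x = z + j + 4 * b) \<or> (\<exists>a. 2 * a + 2 \<le> j \<and> x = z + j + 3 + 4 * a)"
  proof (cases "r = 1")
    case True
    hence w0: "w = 0" using c(1) by simp
    obtain a where a: "j - 1 - (u + r) = 2 * a" using c(3) by (elim evenE) simp
    have "2 * a + 2 \<le> j \<and> x = z + j + 3 + 4 * a" using a c(2) c(6) True w0 j1 by linarith
    thus ?thesis by blast
  next
    case False
    hence r0: "r = 0" and w1: "w = 1" using c(1) by auto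
    obtain b where b: "j - (u + w) = 2 * b" using c(5) by (elim evenE) simp
    have "2 * b \<le> j - 1 \<and> x = z + j + 4 * b" using b c(4) c(6) r0 w1 j1 by linarith
    thus ?thesis by blast
  qed
next
  assume "(\<exists>b. 2 * b \<le> j - 1 \<and> x = z + j + 4 * b) \<or> (\<exists>a. 2 * a + 2 \<le> j \<and> x = z + j + 3 + 4 * a)"
  thus "x \<in> lengths (Bt z j)"
  proof
    assume "\<exists>b. 2 * b \<le> j - 1 \<and> x = z + j + 4 * b"
    then obtain b where b: "2 * b \<le> j - 1" "x = z + j + 4 * b" by blast
    show ?thesis
    proof (rule lower[of 0 1 "j - 1 - 2 * b"])
      show "0 + 1 = (1::nat)" by simp
      show "j - 1 - 2 * b + 0 \<le> j - 1" by simp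
      have "j - 1 - (j - 1 - 2 * b + 0) = 2 * b" using b by linarith
      thus "even (j - 1 - (j - 1 - 2 * b + 0))" by simp
      show "j - 1 - 2 * b + 1 \<le> j" using j1 by simp
      have "j - (j - 1 - 2 * b + 1) = 2 * b" using b j1 by linarith
      thus "even (j - (j - 1 - 2 * b + 1))" by simp
      show "2 * x + 4 * (j - 1 - 2 * b) + 0 + 3 * 1 = 2 * z + 2 * (j - 1) + 1 + 4 * j"
        using b j1 by linarith
    qed
  next
    assume "\<exists>a. 2 * a + 2 \<le> j \<and> x = z + j + 3 + 4 * a"
    then obtain a where a: "2 * a + 2 \<le> j" "x = z + j + 3 + 4 * a" by blast
    show ?thesis
    proof (rule lower[of 1 0 "j - 2 - 2 * a"])
      show "1 + 0 = (1::nat)" by simp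
      show "j - 2 - 2 * a + 1 \<le> j - 1" using a by simp
      have "j - 1 - (j - 2 - 2 * a + 1) = 2 * a" using a by linarith
      thus "even (j - 1 - (j - 2 - 2 * a + 1))" by simp
      show "j - 2 - 2 * a + 0 \<le> j" by simp
      have "j - (j - 2 - 2 * a + 0) = 2 * a + 2" using a by linarith
      thus "even (j - (j - 2 - 2 * a + 0))" by simp
      show "2 * x + 4 * (j - 2 - 2 * a) + 1 + 3 * 0 = 2 * z + 2 * (j - 1) + 1 + 4 * j"
        using a by linarith
    qed
  qed
qed


lemma amp_char0:
  "(((\<exists>k::int. int x = int m + 4 * k) \<or> (\<exists>k::int. int x = int m + 3 + 4 * k) \<or> (\<exists>k::int. int x = int m + 4 + 4 * k)) \<and> m \<le> x) \<longleftrightarrow>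
   ((\<exists>b. x = m + 4 * b) \<or> (\<exists>a. x = m + 3 + 4 * a))"
  by presburger
lemma amp_char:
  "((\<exists>y\<in>{0::int, 3, 4}. \<exists>k::int. int x = int m + y + 4 * k) \<and> m \<le> x) \<longleftrightarrow>
   ((\<exists>b. x = m + 4 * b) \<or> (\<exists>a. x = m + 3 + 4 * a))"
  using amp_char0[of x m] by auto

lemma lengths_empty: "lengths ({#} :: 'a::comm_monoid_add multiset) = {0}"
proof -
  have "As = []" if "\<forall>A\<in>set As. atom A" "sum_list As = ({#} :: 'a multiset)" for As
  proof (cases As)
    case (Cons a r)
    hence "atom a" using that by simp
    moreover have "a \<subseteq># sum_list As" using Cons sub_sum_list by simp
    ultimately show ?thesis using that(2) atom_ne by fastforce
  qed simp
  thus ?thesis unfolding lengths_def by force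
qed

lemma ar1: "(4 * a + 3 \<le> 4 * (t::nat)) \<longleftrightarrow> (2 * a + 2 \<le> 2 * t + 1)" by presburger
lemma ar2: "(4 * b \<le> 4 * (t::nat) + 3) \<longleftrightarrow> (2 * b \<le> 2 * t + 1)" by presburger
lemma ar3: "(m::nat) + 4 * t \<le> 3 * m \<Longrightarrow> m + 4 * t \<noteq> 3 * m \<Longrightarrow> 2 * t + 1 \<le> m" by presburger
lemma ar4: "(m::nat) + 3 + 4 * t \<le> 3 * m \<Longrightarrow> 2 * t + 2 \<le> m" by presburger

theorem proposition3p5:
  shows "\<forall>L \<in> sets_of_lengths (UNIV :: 6 set).
           is_AMP (int ` L) 4 {0, 3, 4} \<longrightarrow> L \<in> sets_of_lengths (UNIV :: (2 ^ 5) set)"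
proof (intro ballI impI)
  fix L assume "L \<in> sets_of_lengths (UNIV :: 6 set)" and amp: "is_AMP (int ` L) 4 {0, 3, 4}"
  then obtain B :: "6 multiset" where LB: "L = lengths B" unfolding sets_of_lengths_def by blast
  have fin: "finite (int ` L)" and ne: "int ` L \<noteq> {}" and
    eq: "int ` L = {x. \<exists>y\<in>{0,3,4}. \<exists>k::int. x = Min (int ` L) + y + 4 * k} \<inter> {Min (int ` L)..Max (int ` L)}"
    using amp unfolding is_AMP_def by auto
  have finL: "finite L" using fin by (simp add: finite_image_iff)
  have neL: "L \<noteq> {}" using ne by simp
  define m where "m = Min L"
  define M where "M = Max L"
  have mi: "Min (int ` L) = int m" unfolding m_def using mono_Min_commute[of int L] finL neL
    by (simp add: mono_def)
  have ma: "Max (int ` L) = int M" unfolding M_def using mono_Max_commute[of int L] finL neL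
    by (simp add: mono_def)
  have mL: "m \<in> L" unfolding m_def using finL neL by simp
  have MxL: "M \<in> L" unfolding M_def using finL neL by simp
  have mM: "m \<le> M" unfolding m_def M_def using finL neL by simp
  have char: "x \<in> L \<longleftrightarrow> ((\<exists>b. x = m + 4 * b) \<or> (\<exists>a. x = m + 3 + 4 * a)) \<and> x \<le> M" for x
  proof -
    have "x \<in> L \<longleftrightarrow> int x \<in> int ` L" by auto
    also have "\<dots> \<longleftrightarrow> (\<exists>y\<in>{0::int,3,4}. \<exists>k::int. int x = int m + y + 4 * k) \<and> m \<le> x \<and> x \<le> M"
      by (subst eq) (simp add: mi ma)
    also have "\<dots> \<longleftrightarrow> ((\<exists>b. x = m + 4 * b) \<or> (\<exists>a. x = m + 3 + 4 * a)) \<and> x \<le> M"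
      using amp_char[of x m] by blast
    finally show ?thesis .
  qed
  have b3: "M \<le> 3 * m" using c6_bound[of m B M] mL MxL LB by simp
  have ext: "M = 3 * m \<Longrightarrow> m + 3 \<notin> L" using c6_extremal[of m B] mL MxL LB by blast
  show "L \<in> sets_of_lengths (UNIV :: (2 ^ 5) set)"
  proof (cases "m = 0")
    case True
    hence "M = 0" using b3 by simp
    hence "L = {0}" using char True by auto
    hence "L = lengths ({#} :: (2^5) multiset)" by (simp add: lengths_empty)
    thus ?thesis unfolding sets_of_lengths_def zero_sum_def by force
  next
    case m1: False
    obtain t where t: "M = m + 4 * t \<or> M = m + 3 + 4 * t" using char[of M] MxL by blast
    define j where "j = (if M = m + 4 * t then 2 * t + 1 else 2 * t + 2)"
    have j1: "1 \<le> j" unfolding j_def by simp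
    have jm: "j \<le> m"
    proof (cases "M = m + 4 * t")
      case True
      show ?thesis
      proof (cases "t = 0")
        case True thus ?thesis using m1 \<open>M = m + 4 * t\<close> unfolding j_def by simp
      next
        case False
        hence "m + 3 \<in> L" using char[of "m + 3"] \<open>M = m + 4 * t\<close> by auto
        hence "M \<noteq> 3 * m" using ext by blast
        thus ?thesis using ar3[of m t] b3 True unfolding j_def by simp
      qed
    next
      case False
      hence "M = m + 3 + 4 * t" using t by simp
      thus ?thesis using ar4[of m t] b3 False unfolding j_def by simp
    qed
    define z where "z = m - j"
    have zj: "z + j = m" unfolding z_def using jm by simp
    have "L = lengths (Bt z j)"
    proof (rule set_eqI)
      fix x
      have "x \<in> lengths (Bt z j) \<longleftrightarrow>
        (\<exists>b. 2 * b \<le> j - 1 \<and> x = m + 4 * b) \<or> (\<exists>a. 2 * a + 2 \<le> j \<and> x = m + 3 + 4 * a)"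
        using len_Bt[OF j1, of x z] zj by (simp add: add.assoc)
      also have "\<dots> \<longleftrightarrow> ((\<exists>b. x = m + 4 * b) \<or> (\<exists>a. x = m + 3 + 4 * a)) \<and> x \<le> M"
      proof (cases "M = m + 4 * t")
        case True
        hence jj: "j = 2 * t + 1" unfolding j_def by simp
        show ?thesis using True unfolding jj by (auto; presburger)
      next
        case False
        hence MM: "M = m + 3 + 4 * t" using t by simp
        hence jj: "j = 2 * t + 2" using False unfolding j_def by simp
        show ?thesis unfolding jj MM by (auto; presburger)
      qed
      finally show "x \<in> L \<longleftrightarrow> x \<in> lengths (Bt z j)" using char by simp
    qed
    moreover have "zero_sum (Bt z j)"
    proof -
      have "m \<in> lengths (Bt z j)" using mL \<open>L = lengths (Bt z j)\<close> by simp
      then obtain As where "\<forall>A\<in>set As. atom A" "sum_list As = Bt z j" unfolding lengths_def by blast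
      thus ?thesis using lengths_zero_sum unfolding zero_sum_def by metis
    qed
    ultimately show ?thesis unfolding sets_of_lengths_def by blast
  qed
qed


end
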